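(* Let $b\ge 2$ be even and $n\ge 2$. Then $$g(SC^{+}(b,n)) = b + \frac{b^{2n}(b-1) + b^{n}(bn-n-1)}{2}.$$
   Context: For an even integer $b\ge2$ and $n\ge0$, $SC^{+}(b,n)=\langle\{b^{n+i}+1: i\in\mathbb{N}\}\rangle$ (submonoid of $(\mathbb{N},+)$ generated by these numbers, a numerical semigroup). The genus $g(S)$ is the cardinality of $\mathbb{N}\setminus S$. *)

theory Defs
  imports Complex_Main
begin

inductive_set submonoid_gen :: "nat set \<Rightarrow> nat set" for A :: "nat set" where
  zero: "0 \<in> submonoid_gen A"
| add: "a \<in> A \<Longrightarrow> s \<in> submonoid_gen A \<Longrightarrow> a + s \<in> submonoid_gen A"

definition SCplus :: "nat \<Rightarrow> nat \<Rightarrow> nat set" where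
  "SCplus b n = submonoid_gen {b ^ (n + i) + 1 | i. True}"

definition genus :: "nat set \<Rightarrow> nat" where
  "genus S = card (UNIV - S)"

end

theory Submission
  imports Defs
begin

function ds :: "nat \<Rightarrow> nat \<Rightarrow> nat" where
  "ds b x = (if x = 0 \<or> b < 2 then 0 else x mod b + ds b (x div b))"
  by auto
termination by (relation "measure (\<lambda>(b,x). x)") auto

declare ds.simps[simp del]

lemma ds_zero[simp]: "ds b 0 = 0"
  by (simp add: ds.simps)

lemma ds_step:
  assumes "b \<ge> 2" "r < b"
  shows "ds b (b*q + r) = ds b q + r"
proof (cases "b*q + r = 0")
  case True
  then show ?thesis using assms by auto
next
  case False
  have "(b*q + r) mod b = r" using assms by simp
  moreover have "(b*q + r) div b = q" using assms by simp
  ultimately show ?thesis using False assms by (subst ds.simps) simp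
qed

lemma ds_small: "b \<ge> 2 \<Longrightarrow> x < b \<Longrightarrow> ds b x = x"
  using ds_step[of b x 0] by simp

lemma ds_mult: "b \<ge> 2 \<Longrightarrow> ds b (b*q) = ds b q"
  using ds_step[of b 0 q] by simp

lemma ds_split: "b \<ge> 2 \<Longrightarrow> ds b x = ds b (x div b) + x mod b"
  using ds_step[of b "x mod b" "x div b"] by simp

lemma ds_le: "b \<ge> 2 \<Longrightarrow> ds b x \<le> x"
proof (induction x rule: less_induct)
  case (less x)
  show ?case
  proof (cases "x = 0")
    case True then show ?thesis by simp
  next
    case False
    then have "x div b < x" using less.prems by simp
    then have "ds b (x div b) \<le> x div b" using less by blast
    moreover have "x div b \<le> b * (x div b)" using less.prems by simp
    moreover have "x = b * (x div b) + x mod b" by simp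
    ultimately show ?thesis using ds_split[OF less.prems, of x] by linarith
  qed
qed

lemma ds_suc: "b \<ge> 2 \<Longrightarrow> ds b (x + 1) \<le> ds b x + 1"
proof (induction x rule: less_induct)
  case (less x)
  define q where "q = x div b"
  define r where "r = x mod b"
  have x: "x = b*q + r" and rb: "r < b" using less.prems by (auto simp: q_def r_def)
  show ?case
  proof (cases "r + 1 < b")
    case True
    have "x + 1 = b*q + (r+1)" using x by simp
    then show ?thesis using ds_step[OF less.prems True, of q] ds_step[OF less.prems rb, of q] x by simp
  next
    case False
    then have r: "r = b - 1" using rb by simp
    then have "x + 1 = b*(q+1)" using x less.prems by (simp add: algebra_simps)
    then have e: "ds b (x+1) = ds b (q+1)" by (metis ds_mult[OF less.prems])
    have "q \<le> b*q" using less.prems by simp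
    moreover have "r \<ge> 1" using r less.prems by simp
    ultimately have "q < x" using x by linarith
    then have "ds b (q+1) \<le> ds b q + 1" using less by blast
    then show ?thesis using e ds_step[OF less.prems rb, of q] x r by simp
  qed
qed

lemma ds_add_pow: "b \<ge> 2 \<Longrightarrow> ds b (x + b^i) \<le> ds b x + 1"
proof (induction i arbitrary: x)
  case 0
  then show ?case using ds_suc by simp
next
  case (Suc i)
  define q where "q = x div b"
  define r where "r = x mod b"
  have x: "x = b*q + r" and rb: "r < b" using Suc.prems by (auto simp: q_def r_def)
  have "x + b^Suc i = b*(q + b^i) + r" using x by (simp add: algebra_simps)
  then have "ds b (x + b^Suc i) = ds b (q + b^i) + r" using ds_step[OF Suc.prems rb] by simp
  also have "\<dots> \<le> ds b q + 1 + r" using Suc.IH[OF Suc.prems] by simp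
  finally show ?case using ds_step[OF Suc.prems rb, of q] x by simp
qed

lemma ds_cong: "b \<ge> 2 \<Longrightarrow> (b - 1) dvd (x - ds b x)"
proof (induction x rule: less_induct)
  case (less x)
  show ?case
  proof (cases "x = 0")
    case True then show ?thesis by simp
  next
    case False
    define q where "q = x div b"
    define r where "r = x mod b"
    have x: "x = b*q + r" and rb: "r < b" using less.prems by (auto simp: q_def r_def)
    have "q < x" using False less.prems by (simp add: q_def)
    then have d: "(b-1) dvd (q - ds b q)" using less by blast
    have le: "ds b q \<le> q" using ds_le[OF less.prems] .
    have "x - ds b x = (b-1)*q + (q - ds b q)"
      using ds_step[OF less.prems rb, of q] x le less.prems
      by (simp add: algebra_simps diff_mult_distrib)
    then show ?thesis using d by simp
  qed
qed


lemma sg_add: "x \<in> submonoid_gen G \<Longrightarrow> y \<in> submonoid_gen G \<Longrightarrow> x + y \<in> submonoid_gen G"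
  by (induction x rule: submonoid_gen.induct) (auto simp: add.assoc intro: submonoid_gen.add)

lemma sg_mult: "a \<in> G \<Longrightarrow> c * a \<in> submonoid_gen G"
  by (induction c) (auto intro: submonoid_gen.intros)

lemma sg_mono: "x \<in> submonoid_gen G \<Longrightarrow> G \<subseteq> H \<Longrightarrow> x \<in> submonoid_gen H"
  by (induction x rule: submonoid_gen.induct) (auto intro: submonoid_gen.intros)

lemma gen_SC: "c * (b^(n+i) + 1) \<in> SCplus b n"
  unfolding SCplus_def by (rule sg_mult) blast

lemma SC_add: "x \<in> SCplus b n \<Longrightarrow> y \<in> SCplus b n \<Longrightarrow> x + y \<in> SCplus b n"
  unfolding SCplus_def by (rule sg_add)

lemma SC_Suc: "x \<in> SCplus b (Suc n) \<Longrightarrow> x \<in> SCplus b n"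
  unfolding SCplus_def
proof (erule sg_mono)
  show "{b ^ (Suc n + i) + 1 |i. True} \<subseteq> {b ^ (n + i) + 1 |i. True}"
  proof
    fix x assume "x \<in> {b ^ (Suc n + i) + 1 |i. True}"
    then obtain i where "x = b^(n + Suc i) + 1" by auto
    then show "x \<in> {b ^ (n + i) + 1 |i. True}" by blast
  qed
qed

lemma dvd_pow_minus1: "((b::nat) - 1) dvd (b^i - 1)"
proof (induction i)
  case 0 then show ?case by simp
next
  case (Suc i)
  show ?case
  proof (cases "b = 0")
    case True then show ?thesis by simp
  next
    case False
    then have "b^i \<ge> 1" by simp
    then have "b^Suc i - 1 = b*(b^i - 1) + (b - 1)" using False
      by (simp add: diff_mult_distrib2)
    then show ?thesis using Suc.IH by simp
  qed
qed

lemma SC_rep: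
  assumes "x \<in> SCplus b n" "b \<ge> 2"
  shows "\<exists>A k. x = b^n*A + k \<and> ds b A \<le> k \<and> k \<le> A \<and> (b-1) dvd (A - k)"
  using assms(1) unfolding SCplus_def
proof (induction x rule: submonoid_gen.induct)
  case zero
  then show ?case by (intro exI[of _ 0]) simp
next
  case (add a s)
  then obtain i where a: "a = b^(n+i) + 1" by auto
  from add.IH obtain A k where s: "s = b^n*A + k" "ds b A \<le> k" "k \<le> A" "(b-1) dvd (A - k)" by blast
  have p: "b^i \<ge> 1" using assms(2) by simp
  have "a + s = b^n*(A + b^i) + (k+1)" using a s by (simp add: power_add algebra_simps)
  moreover have "ds b (A + b^i) \<le> k + 1" using ds_add_pow[OF assms(2), of A i] s by simp
  moreover have "k + 1 \<le> A + b^i" using s p by simp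
  moreover have "(b-1) dvd ((A + b^i) - (k+1))"
  proof -
    have "(A + b^i) - (k+1) = (A - k) + (b^i - 1)" using s p by simp
    then show ?thesis using s(4) dvd_pow_minus1[of b i] by simp
  qed
  ultimately show ?case by blast
qed

lemma SC_of_rep:
  assumes "b \<ge> 2"
  shows "ds b A \<le> k \<Longrightarrow> k \<le> A \<Longrightarrow> (b-1) dvd (A - k) \<Longrightarrow> b^n*A + k \<in> SCplus b n"
proof (induction A arbitrary: n k rule: less_induct)
  case (less A)
  show ?case
  proof (cases "A = 0")
    case True
    then have "k = 0" using less.prems by simp
    then show ?thesis using True gen_SC[of 0 b n 0] by simp
  next
    case False
    define q where "q = A div b"
    define r where "r = A mod b"
    have Aq: "A = b*q + r" and rb: "r < b" using assms by (auto simp: q_def r_def)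
    have dsA: "ds b A = ds b q + r" using ds_step[OF assms rb, of q] Aq by simp
    have qA: "q < A" using False assms by (simp add: q_def)
    show ?thesis
    proof (cases "k < q + r")
      case True
      have h1: "ds b q \<le> k - r" using dsA less.prems by simp
      have h2: "k - r \<le> q" using True by simp
      have h3: "(b-1) dvd (q - (k - r))"
      proof -
        have "A - k = (b-1)*q + (q - (k - r))" using Aq True dsA less.prems assms
          by (simp add: algebra_simps diff_mult_distrib)
        then show ?thesis using less.prems(3)
          by (metis dvd_add_right_iff dvd_triv_left)
      qed
      have "b^(Suc n)*q + (k - r) \<in> SCplus b (Suc n)" using less.IH[OF qA h1 h2 h3] .
      then have i1: "b^(Suc n)*q + (k - r) \<in> SCplus b n" by (rule SC_Suc)
      have i2: "r * (b^(n+0) + 1) \<in> SCplus b n" by (rule gen_SC)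
      have "b^n*A + k = r * (b^(n+0) + 1) + (b^(Suc n)*q + (k - r))"
        using Aq dsA less.prems by (simp add: algebra_simps)
      then show ?thesis using SC_add[OF i2 i1] by simp
    next
      case False
      obtain q' where q': "A - k = (b-1)*q'" using less.prems(3) by blast
      have "A - k \<le> (b-1)*q" using False Aq assms by (simp add: algebra_simps diff_mult_distrib)
      then have "(b-1)*q' \<le> (b-1)*q" using q' by simp
      then have "q' \<le> q" using assms by simp
      then have qk: "q' \<le> k" using False by simp
      have i1: "(k - q') * (b^(n+0) + 1) \<in> SCplus b n" by (rule gen_SC)
      have i2: "q' * (b^(n+1) + 1) \<in> SCplus b n" by (rule gen_SC)
      obtain c where c: "k = q' + c" using qk le_Suc_ex by blast
      have "(b-1)*q' + q' = b*q'" using assms by (simp add: diff_mult_distrib)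
      then have Ac: "A = c + b*q'" using q' less.prems c by simp
      have "b^n*A + k = c * (b^(n+0) + 1) + q' * (b^(n+1) + 1)"
        unfolding Ac c by (simp add: algebra_simps)
      moreover have "k - q' = c" using c by simp
      ultimately have "b^n*A + k = (k - q') * (b^(n+0) + 1) + q' * (b^(n+1) + 1)" by simp
      then show ?thesis using SC_add[OF i1 i2] by simp
    qed
  qed
qed


definition gg :: "nat \<Rightarrow> nat \<Rightarrow> nat" where "gg b A = A - ds b A"
definition Ae :: "nat \<Rightarrow> nat \<Rightarrow> nat" where "Ae b e = (LEAST A. (b-1)*e \<le> gg b A)"
definition ww :: "nat \<Rightarrow> nat \<Rightarrow> nat \<Rightarrow> nat" where "ww b n e = (b^n+1) * Ae b e - (b-1)*e"

lemma gg_Suc: "b \<ge> 2 \<Longrightarrow> gg b A \<le> gg b (Suc A)"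
  using ds_suc[of b A] ds_le[of b A] ds_le[of b "Suc A"] unfolding gg_def by simp

lemma gg_mono: "b \<ge> 2 \<Longrightarrow> A \<le> A' \<Longrightarrow> gg b A \<le> gg b A'"
  using lift_Suc_mono_le[of "gg b" A A'] gg_Suc by blast

lemma gg_be: "b \<ge> 2 \<Longrightarrow> (b-1)*e \<le> gg b (b*e)"
  using ds_mult[of b e] ds_le[of b e] unfolding gg_def by (simp add: diff_mult_distrib)

lemma Ae_prop: "b \<ge> 2 \<Longrightarrow> (b-1)*e \<le> gg b (Ae b e)"
  unfolding Ae_def by (rule LeastI[of _ "b*e"]) (rule gg_be)

lemma Ae_le: "(b-1)*e \<le> gg b A \<Longrightarrow> Ae b e \<le> A"
  unfolding Ae_def by (rule Least_le)

lemma Ae_be: "b \<ge> 2 \<Longrightarrow> Ae b e \<le> b*e"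
  using Ae_le gg_be by blast

lemma Ae_ge: "b \<ge> 2 \<Longrightarrow> (b-1)*e + ds b (Ae b e) \<le> Ae b e"
  using Ae_prop[of b e] ds_le[of b "Ae b e"] unfolding gg_def by simp

lemma ww_int: "b \<ge> 2 \<Longrightarrow> int (ww b n e) = (int b^n+1) * int (Ae b e) - (int b - 1) * int e"
proof -
  assume b: "b \<ge> 2"
  have "(b-1)*e \<le> Ae b e" using Ae_ge[OF b, of e] by simp
  also have "\<dots> \<le> (b^n+1) * Ae b e" by simp
  finally show ?thesis unfolding ww_def using b by (simp add: of_nat_diff algebra_simps)
qed

lemma ww_in: "b \<ge> 2 \<Longrightarrow> ww b n e \<in> SCplus b n"
proof -
  assume b: "b \<ge> 2"
  define A where "A = Ae b e"
  have h: "(b-1)*e + ds b A \<le> A" using Ae_ge[OF b] A_def by simp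
  have "b^n*A + (A - (b-1)*e) \<in> SCplus b n"
    by (rule SC_of_rep[OF b]) (use h in auto)
  moreover have "b^n*A + (A - (b-1)*e) = ww b n e" unfolding ww_def A_def[symmetric]
    using h by (simp add: algebra_simps)
  ultimately show ?thesis by simp
qed

lemma copr: "even (b::nat) \<Longrightarrow> b \<ge> 2 \<Longrightarrow> coprime (b-1) (b^n+1)"
proof -
  assume ev: "even b" and b: "b \<ge> 2"
  define d where "d = gcd (b-1) (b^n+1)"
  have d1: "d dvd b^n+1" and d2: "d dvd b - 1" unfolding d_def by auto
  have "d dvd b^n - 1" using d2 dvd_pow_minus1[of b n] dvd_trans by blast
  then have "d dvd (b^n+1) - (b^n - 1)" using d1 dvd_diff_nat by blast
  moreover have "(b^n+1) - (b^n - 1) = 2" using b by (simp add: Suc_leI)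
  ultimately have "d dvd 2" by simp
  moreover have "odd (b-1)" using ev b by simp
  then have "odd d" using d2 dvd_trans by blast
  ultimately have "d = 1"
  proof -
    assume a: "d dvd 2" "odd d"
    have "d \<le> 2" using dvd_imp_le[OF a(1)] by simp
    moreover have "d \<noteq> 0" "d \<noteq> 2" using a by auto
    ultimately show ?thesis by linarith
  qed
  then show ?thesis unfolding d_def by (simp add: coprime_iff_gcd_eq_1)
qed


lemma cancel_lemma:
  assumes ev: "even (b::nat)" and b: "b \<ge> 2"
    and d: "int (b^n+1) dvd int (b^n+1) * X - (int b - 1) * Z"
  shows "int (b^n+1) dvd Z"
proof -
  have c: "coprime (b^n+1) (b-1)" using copr[OF ev b] by (simp add: coprime_commute)
  have c1: "coprime (int (b^n+1)) (int (b-1))" using c by (simp only: coprime_int_iff)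
  have "int (b-1) = int b - 1" using b by simp
  then have c2: "coprime (int (b^n+1)) (int b - 1)" using c1 by simp
  have "int (b^n+1) dvd (int b - 1) * Z"
    using d by (metis dvd_diff_right_iff dvd_triv_left diff_diff_eq2 dvd_diff)
  then show ?thesis using coprime_dvd_mult_right_iff[OF c2] by blast
qed

lemma ww_mod_dvd:
  assumes ev: "even (b::nat)" and b: "b \<ge> 2"
    and m: "ww b n e1 mod (b^n+1) = ww b n e2 mod (b^n+1)"
  shows "int (b^n+1) dvd (int e1 - int e2)"
proof -
  have "int (ww b n e1) mod int (b^n+1) = int (ww b n e2) mod int (b^n+1)"
    using m by (metis of_nat_mod)
  then have "int (b^n+1) dvd int (ww b n e1) - int (ww b n e2)"
    by (simp add: mod_eq_dvd_iff)
  moreover have "int (ww b n e1) - int (ww b n e2) =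
      int (b^n+1) * (int (Ae b e1) - int (Ae b e2)) - (int b - 1) * (int e1 - int e2)"
    by (simp add: ww_int[OF b] algebra_simps)
  ultimately show ?thesis using cancel_lemma[OF ev b] by metis
qed

lemma ww_inj:
  assumes ev: "even (b::nat)" and b: "b \<ge> 2"
    and e: "e1 \<le> b^n" "e2 \<le> b^n"
    and m: "ww b n e1 mod (b^n+1) = ww b n e2 mod (b^n+1)"
  shows "e1 = e2"
proof (rule ccontr)
  assume ne: "e1 \<noteq> e2"
  have "int (b^n+1) dvd (int e1 - int e2)" by (rule ww_mod_dvd[OF ev b m])
  then have "\<bar>int (b^n+1)\<bar> \<le> \<bar>int e1 - int e2\<bar>"
    using ne by (intro dvd_imp_le_int) auto
  moreover have "int e1 \<le> int b ^ n" "int e2 \<le> int b ^ n" using e by (metis of_nat_le_iff of_nat_power)+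
  ultimately have "\<bar>int b ^ n + 1\<bar> \<le> \<bar>int e1 - int e2\<bar>" "int e1 \<le> int b ^ n" "int e2 \<le> int b ^ n" by simp_all
  then show False by arith
qed

lemma ww_min:
  assumes ev: "even (b::nat)" and b: "b \<ge> 2"
    and e: "e \<le> b^n" and y: "y \<in> SCplus b n"
    and m: "y mod (b^n+1) = ww b n e mod (b^n+1)"
  shows "ww b n e \<le> y"
proof -
  obtain A k where r: "y = b^n*A + k" "ds b A \<le> k" "k \<le> A" "(b-1) dvd (A - k)"
    using SC_rep[OF y b] by blast
  obtain e' where e': "A - k = (b-1)*e'" using r(4) by blast
  have yi: "int y = int (b^n+1) * int A - (int b - 1) * int e'"
  proof -
    have "int (A - k) = (int b - 1) * int e'" using e' b by (simp add: of_nat_diff)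
    then show ?thesis using r(1,3) by (simp add: of_nat_diff algebra_simps)
  qed
  have "int y mod int (b^n+1) = int (ww b n e) mod int (b^n+1)"
    using m by (metis of_nat_mod)
  then have "int (b^n+1) dvd int y - int (ww b n e)"
    by (simp add: mod_eq_dvd_iff)
  moreover have "int y - int (ww b n e) =
      int (b^n+1) * (int A - int (Ae b e)) - (int b - 1) * (int e' - int e)"
    using yi by (simp add: ww_int[OF b] algebra_simps)
  ultimately have "int (b^n+1) dvd (int e' - int e)" using cancel_lemma[OF ev b] by metis
  then obtain t where t: "int e' - int e = int (b^n+1) * t" by blast
  consider "t = 0" | "t \<ge> 1" | "t \<le> -1" by linarith
  then show ?thesis
  proof cases
    case 1
    then have ee: "e' = e" using t by simp
    have "(b-1)*e \<le> gg b A" using e' ee r(2,3) unfolding gg_def by simp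
    then have "Ae b e \<le> A" by (rule Ae_le)
    then have "(int b^n + 1) * int (Ae b e) \<le> (int b^n + 1) * int A"
      by (intro mult_left_mono) auto
    then have "int (ww b n e) \<le> int y"
      using ww_int[OF b, of n e] yi ee by (simp add: add.commute)
    then show ?thesis by simp
  next
    case 3
    have "int (b^n+1) * t \<le> int (b^n+1) * (-1)" by (rule mult_left_mono) (use 3 in auto)
    then have "int (b^n+1) * t \<le> - int (b^n+1)" by simp
    moreover have "int e \<le> int b ^ n" using e by (metis of_nat_le_iff of_nat_power)
    moreover have "int e' \<ge> 0" by simp
    ultimately have False using t by (simp only: of_nat_add of_nat_power of_nat_1)
    then show ?thesis by simp
  next
    case 2
    define mm where "mm = int (b^n)"
    have mm0: "mm \<ge> 0" unfolding mm_def by simp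
    have b1: "int b - 1 \<ge> 1" using b by simp
    have "int (b^n+1) * 1 \<le> int (b^n+1) * t" by (rule mult_left_mono) (use 2 in auto)
    then have "int (b^n+1) * t \<ge> int (b^n+1)" by simp
    then have ee: "int e' \<ge> int e + mm + 1" using t unfolding mm_def by simp
    have A1: "int A \<ge> (int b - 1) * int e'"
    proof -
      have "(b-1)*e' \<le> A" using e' r(3) by (metis diff_le_self)
      then have "int (b-1) * int e' \<le> int A" by (metis of_nat_le_iff of_nat_mult)
      moreover have "int (b-1) = int b - 1" using b by simp
      ultimately show ?thesis by metis
    qed
    have A2: "(int b - 1) * int e' \<ge> (int b - 1) * (int e + mm + 1)"
      using ee b1 by (simp add: mult_left_mono)
    have Y1: "int y \<ge> mm * int A" using r(1) unfolding mm_def by simp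
    have Y2: "mm * int A \<ge> mm * ((int b - 1) * (int e + mm + 1))"
      using A1 A2 mm0 by (simp add: mult_left_mono)
    have W1: "int (ww b n e) \<le> (mm + 1) * (int b * int e) - (int b - 1) * int e"
    proof -
      have "int (Ae b e) \<le> int b * int e" using Ae_be[OF b, of e] by (metis of_nat_le_iff of_nat_mult)
      then have "(mm+1) * int (Ae b e) \<le> (mm + 1) * (int b * int e)" using mm0 by (simp add: mult_left_mono)
      then show ?thesis using ww_int[OF b, of n e] unfolding mm_def by simp
    qed
    have F1: "(mm+1) * int e \<le> (mm+1) * mm" using e mm0 unfolding mm_def by (simp add: mult_left_mono)
    have "(mm+1) * mm * 1 \<le> (mm+1) * mm * (int b - 1)" by (rule mult_left_mono) (use b1 mm0 in auto)
    then have F2: "(mm+1) * mm \<le> (mm+1) * mm * (int b - 1)" by simp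
    have L: "(mm + 1) * (int b * int e) - (int b - 1) * int e = mm*int b*int e + int e"
      by (simp add: algebra_simps)
    have R: "mm * ((int b - 1) * (int e + mm + 1)) = mm*int b*int e - mm*int e + (mm+1)*mm*(int b - 1)"
      by (simp add: algebra_simps)
    have F1': "int e + mm*int e \<le> (mm+1)*mm" using F1 by (simp add: algebra_simps)
    have "(mm + 1) * (int b * int e) - (int b - 1) * int e \<le> mm * ((int b - 1) * (int e + mm + 1))"
      unfolding L R using F1' F2 by linarith
    then have "int (ww b n e) \<le> int y" using W1 Y1 Y2 by linarith
    then show ?thesis by simp
  qed
qed


lemma res_bij:
  assumes ev: "even (b::nat)" and b: "b \<ge> 2"
  shows "bij_betw (\<lambda>e. ww b n e mod (b^n+1)) {..b^n} {..<b^n+1}"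
proof -
  let ?f = "\<lambda>e. ww b n e mod (b^n+1)"
  have inj: "inj_on ?f {..b^n}"
    by (rule inj_onI) (use ww_inj[OF ev b] in auto)
  have sub: "?f ` {..b^n} \<subseteq> {..<b^n+1}" by auto
  have "card (?f ` {..b^n}) = card {..<b^n+1}"
    using card_image[OF inj] by simp
  then have "?f ` {..b^n} = {..<b^n+1}" using card_subset_eq[OF _ sub] by simp
  then show ?thesis using inj unfolding bij_betw_def by simp
qed

definition GG :: "nat \<Rightarrow> nat \<Rightarrow> nat \<Rightarrow> nat set" where
  "GG b n e = {y. y mod (b^n+1) = ww b n e mod (b^n+1) \<and> y < ww b n e}"

lemma gaps_eq:
  assumes ev: "even (b::nat)" and b: "b \<ge> 2"
  shows "UNIV - SCplus b n = (\<Union>e\<in>{..b^n}. GG b n e)"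
proof
  show "UNIV - SCplus b n \<subseteq> (\<Union>e\<in>{..b^n}. GG b n e)"
  proof
    fix y assume y: "y \<in> UNIV - SCplus b n"
    have "y mod (b^n+1) \<in> {..<b^n+1}" by simp
    then obtain e where e: "e \<le> b^n" "y mod (b^n+1) = ww b n e mod (b^n+1)"
      using bij_betw_imp_surj_on[OF res_bij[OF ev b, of n]] by (metis (no_types, lifting) atMost_iff imageE)
    have "y < ww b n e"
    proof (rule ccontr)
      assume "\<not> y < ww b n e"
      then have le: "ww b n e \<le> y" by simp
      then have "(b^n+1) dvd (y - ww b n e)" using e(2) by (simp add: mod_eq_dvd_iff_nat)
      then obtain j where j: "y - ww b n e = j * (b^n+1)" by (metis dvd_def mult.commute)
      have "j * (b^(n+0)+1) \<in> SCplus b n" by (rule gen_SC)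
      then have "ww b n e + j * (b^(n+0)+1) \<in> SCplus b n" using SC_add ww_in[OF b] by blast
      moreover have "ww b n e + j * (b^(n+0)+1) = y" using j le by simp
      ultimately show False using y by simp
    qed
    then show "y \<in> (\<Union>e\<in>{..b^n}. GG b n e)" using e unfolding GG_def by auto
  qed
next
  show "(\<Union>e\<in>{..b^n}. GG b n e) \<subseteq> UNIV - SCplus b n"
  proof
    fix y assume "y \<in> (\<Union>e\<in>{..b^n}. GG b n e)"
    then obtain e where e: "e \<le> b^n" "y mod (b^n+1) = ww b n e mod (b^n+1)" "y < ww b n e"
      unfolding GG_def by auto
    show "y \<in> UNIV - SCplus b n"
      using ww_min[OF ev b e(1) _ e(2)] e(3) by auto
  qed
qed

lemma card_GG: "card (GG b n e) = ww b n e div (b^n+1)"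
proof -
  let ?M = "b^n+1" and ?w = "ww b n e"
  have "GG b n e = (\<lambda>j. ?w mod ?M + ?M*j) ` {..< ?w div ?M}"
  proof
    show "GG b n e \<subseteq> (\<lambda>j. ?w mod ?M + ?M*j) ` {..< ?w div ?M}"
    proof
      fix y assume "y \<in> GG b n e"
      then have y: "y mod ?M = ?w mod ?M" "y < ?w" unfolding GG_def by auto
      have "y = y mod ?M + ?M * (y div ?M)" by (metis mod_mult_div_eq add.commute)
      moreover have "y div ?M < ?w div ?M"
      proof (rule ccontr)
        assume "\<not> y div ?M < ?w div ?M"
        then have "?M * (?w div ?M) \<le> ?M * (y div ?M)" by (intro mult_le_mono2) simp
        moreover have "?M * (?w div ?M) + ?w mod ?M = ?w" by (rule mult_div_mod_eq)
        moreover have "?M * (y div ?M) + y mod ?M = y" by (rule mult_div_mod_eq)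
        ultimately have "?w \<le> y" using y(1) by linarith
        then show False using y(2) by simp
      qed
      ultimately show "y \<in> (\<lambda>j. ?w mod ?M + ?M*j) ` {..< ?w div ?M}" using y(1) by force
    qed
  next
    show "(\<lambda>j. ?w mod ?M + ?M*j) ` {..< ?w div ?M} \<subseteq> GG b n e"
    proof
      fix y assume "y \<in> (\<lambda>j. ?w mod ?M + ?M*j) ` {..< ?w div ?M}"
      then obtain j where j: "j < ?w div ?M" "y = ?w mod ?M + ?M*j" by auto
      have ym: "y mod ?M = ?w mod ?M" using j(2) by (metis mod_mod_trivial mod_mult_self1 mult.commute)
      have "?M * Suc j \<le> ?M * (?w div ?M)" using j(1)
        by (intro mult_le_mono2) simp
      then have m2: "?M*j + ?M \<le> ?M * (?w div ?M)" by simp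
      have m3: "?M * (?w div ?M) + ?w mod ?M = ?w" by (rule mult_div_mod_eq)
      have "y < ?w" using j(2) m2 m3 by linarith
      moreover note ym
      ultimately show "y \<in> GG b n e" unfolding GG_def by simp
    qed
  qed
  moreover have "inj_on (\<lambda>j. ?w mod ?M + ?M*j) {..< ?w div ?M}"
  proof (rule inj_onI)
    fix x y assume "?w mod ?M + ?M*x = ?w mod ?M + ?M*y"
    then have "?M*x = ?M*y" by (metis add_left_cancel)
    then show "x = y" by (metis mult_left_cancel add_is_0 one_neq_zero)
  qed
  ultimately show ?thesis by (simp add: card_image)
qed

lemma genus_sum:
  assumes ev: "even (b::nat)" and b: "b \<ge> 2"
  shows "genus (SCplus b n) = (\<Sum>e\<le>b^n. ww b n e div (b^n+1))"
proof -
  have "genus (SCplus b n) = card (\<Union>e\<in>{..b^n}. GG b n e)"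
    unfolding genus_def gaps_eq[OF ev b] ..
  also have "\<dots> = (\<Sum>e\<le>b^n. card (GG b n e))"
  proof (rule card_UN_disjoint)
    show "finite {..b^n}" by simp
    show "\<forall>e\<in>{..b^n}. finite (GG b n e)" unfolding GG_def by auto
    show "\<forall>i\<in>{..b^n}. \<forall>j\<in>{..b^n}. i \<noteq> j \<longrightarrow> GG b n i \<inter> GG b n j = {}"
      unfolding GG_def using ww_inj[OF ev b] by auto
  qed
  finally show ?thesis by (simp add: card_GG)
qed


lemma ww_real: "b \<ge> 2 \<Longrightarrow> real (ww b n e) = (real b^n+1) * real (Ae b e) - (real b - 1) * real e"
proof -
  assume b: "b \<ge> 2"
  have "real_of_int (int (ww b n e)) = real_of_int ((int b^n+1) * int (Ae b e) - (int b - 1) * int e)"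
    using ww_int[OF b] by simp
  then show ?thesis by simp
qed

lemma gauss_real: "2 * (\<Sum>e\<le>(m::nat). real e) = real m * (real m + 1)"
  using double_gauss_sum[of m, where 'a=real] by (simp add: atMost_atLeast0)

lemma genus_Ae:
  assumes ev: "even (b::nat)" and b: "b \<ge> 2"
  shows "2 * real (genus (SCplus b n)) = 2 * (\<Sum>e\<le>b^n. real (Ae b e)) - real b * real b^n"
proof -
  let ?M = "b^n+1"
  have s1: "(\<Sum>e\<le>b^n. ww b n e div ?M * ?M) + (\<Sum>e\<le>b^n. ww b n e mod ?M) = (\<Sum>e\<le>b^n. ww b n e)"
    by (simp only: sum.distrib[symmetric] div_mult_mod_eq)
  have s2: "(\<Sum>e\<le>b^n. ww b n e mod ?M) = (\<Sum>r\<in>{..<?M}. r)"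
    using sum.reindex_bij_betw[OF res_bij[OF ev b, of n], of id] by simp
  have s3: "(\<Sum>e\<le>b^n. ww b n e div ?M * ?M) = genus (SCplus b n) * ?M"
    unfolding genus_sum[OF ev b, of n] by (rule sum_distrib_right[symmetric])
  have st: "{..<?M} = {..b^n}" by auto
  have E: "genus (SCplus b n) * ?M + (\<Sum>r\<le>b^n. r) = (\<Sum>e\<le>b^n. ww b n e)"
    using s1 s2 s3 unfolding st by simp
  have "real (genus (SCplus b n) * ?M + (\<Sum>r\<le>b^n. r)) = real (\<Sum>e\<le>b^n. ww b n e)"
    by (simp only: E)
  then have "real (genus (SCplus b n)) * (real b^n+1) + (\<Sum>r\<le>b^n. real r) = (\<Sum>e\<le>b^n. real (ww b n e))"
    by (simp only: of_nat_add of_nat_mult of_nat_sum of_nat_power of_nat_1)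
  also have "\<dots> = (real b^n+1) * (\<Sum>e\<le>b^n. real (Ae b e)) - (real b - 1) * (\<Sum>e\<le>b^n. real e)"
    by (simp add: ww_real[OF b] sum_subtractf sum_distrib_left)
  finally have eq: "real (genus (SCplus b n)) * (real b^n+1) + (\<Sum>r\<le>b^n. real r) =
      (real b^n+1) * (\<Sum>e\<le>b^n. real (Ae b e)) - (real b - 1) * (\<Sum>e\<le>b^n. real e)" .
  have g: "2 * (\<Sum>e\<le>b^n. real e) = real b^n * (real b^n + 1)" using gauss_real[of "b^n"] by simp
  have g2: "real b * (2 * (\<Sum>e\<le>b^n. real e)) = real b * (real b^n * (real b^n + 1))" using g by simp
  have "(real b^n+1) * (2 * real (genus (SCplus b n))) =
        (real b^n+1) * (2 * (\<Sum>e\<le>b^n. real (Ae b e)) - real b * real b^n)"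
    using eq g2 by (simp add: algebra_simps)
  moreover have "real b^n \<ge> 0" by simp
  then have "real b^n + 1 \<noteq> 0" by linarith
  ultimately show ?thesis by simp
qed


lemma sum_split_add: "sum f {..<a + (c::nat)} = sum f {..<a} + (\<Sum>i<c. f (a+i))"
  by (induction c) (simp_all add: add.assoc)

lemma double_sum_lt: "2 * (\<Sum>i<n. real i) = real n * (real n - 1)"
  by (induction n) (simp_all add: algebra_simps)

lemma ds_sum_block:
  assumes b: "b \<ge> 2"
  shows "(\<Sum>A<b*Y. real (ds b A)) = real b * (\<Sum>q<Y. real (ds b q)) + real Y * (\<Sum>r<b. real r)"
proof (induction Y)
  case 0 then show ?case by simp
next
  case (Suc Y)
  have "(\<Sum>A<b*Suc Y. real (ds b A)) = (\<Sum>A<b*Y. real (ds b A)) + (\<Sum>r<b. real (ds b (b*Y + r)))"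
    using sum_split_add[of "\<lambda>A. real (ds b A)" "b*Y" b] by (simp add: add.commute)
  also have "(\<Sum>r<b. real (ds b (b*Y + r))) = (\<Sum>r<b. real (ds b Y) + real r)"
    by (rule sum.cong) (auto simp: ds_step[OF b])
  also have "\<dots> = real b * real (ds b Y) + (\<Sum>r<b. real r)" by (simp add: sum.distrib)
  finally show ?case using Suc.IH by (simp add: algebra_simps)
qed

lemma ds_T:
  assumes b: "b \<ge> 2"
  shows "2 * (\<Sum>q<(b-1)*b^L. real (ds b q)) =
    real b^L * (real b - 1) * (real b - 2) + real L * (real b - 1)^2 * real b^L"
proof (induction L)
  case 0
  have "(\<Sum>q<(b-1). real (ds b q)) = (\<Sum>q<(b-1). real q)"
    by (rule sum.cong) (use b in \<open>auto simp: ds_small\<close>)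
  then show ?case using double_sum_lt[of "b-1"] b by (simp add: of_nat_diff algebra_simps)
next
  case (Suc L)
  have e: "(b-1)*b^Suc L = b * ((b-1)*b^L)" by (simp add: algebra_simps)
  have r: "2 * (\<Sum>r<b. real r) = real b * (real b - 1)" by (rule double_sum_lt)
  have "2 * (\<Sum>q<(b-1)*b^Suc L. real (ds b q)) =
     real b * (2 * (\<Sum>q<(b-1)*b^L. real (ds b q))) + real ((b-1)*b^L) * (2 * (\<Sum>r<b. real r))"
    unfolding e ds_sum_block[OF b] by (simp add: algebra_simps)
  also have "\<dots> = real b * (real b^L * (real b - 1) * (real b - 2) + real L * (real b - 1)^2 * real b^L)
      + (real b - 1) * real b^L * (real b * (real b - 1))"
    unfolding Suc.IH r using b by (simp add: of_nat_diff)
  finally show ?case by (simp add: algebra_simps power2_eq_square)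
qed

lemma ds_pow_mult: "b \<ge> 2 \<Longrightarrow> ds b (b^j * c) = ds b c"
  by (induction j) (simp_all add: mult.assoc ds_mult)


lemma ds_X:
  assumes b: "b \<ge> 2" and n: "n \<ge> 2"
  shows "ds b ((b-1)*b^n + b) = b"
proof -
  obtain k where k: "n = Suc (Suc k)" using n by (metis add_2_eq_Suc le_Suc_ex)
  have Xeq: "(b-1)*b^n + b = b*(b*(b^k*(b-1)) + 1)" unfolding k by (simp add: algebra_simps)
  have "ds b ((b-1)*b^n + b) = ds b (b*(b^k*(b-1)) + 1)" unfolding Xeq by (rule ds_mult[OF b])
  also have "\<dots> = ds b (b^k*(b-1)) + 1" using ds_step[OF b, of 1] b by simp
  also have "\<dots> = b" using ds_pow_mult[OF b] ds_small[OF b, of "b-1"] b by simp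
  finally show ?thesis .
qed

lemma Ae_set: "b \<ge> 2 \<Longrightarrow> {A. gg b A < (b-1)*e} = {..<Ae b e}"
proof -
  assume b: "b \<ge> 2"
  show ?thesis
  proof (rule set_eqI, rule iffI)
    fix A assume "A \<in> {A. gg b A < (b-1)*e}"
    then have lt: "gg b A < (b-1)*e" by simp
    have "\<not> Ae b e \<le> A"
    proof
      assume "Ae b e \<le> A"
      then have "gg b (Ae b e) \<le> gg b A" by (rule gg_mono[OF b])
      then show False using Ae_prop[OF b, of e] lt by linarith
    qed
    then show "A \<in> {..<Ae b e}" by simp
  next
    fix A assume "A \<in> {..<Ae b e}"
    then have "A < Ae b e" by simp
    then have "\<not> (b-1)*e \<le> gg b A" unfolding Ae_def by (rule not_less_Least)
    then show "A \<in> {A. gg b A < (b-1)*e}" by simp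
  qed
qed

lemma Ae_count:
  assumes b: "b \<ge> 2" and n: "n \<ge> 2" and e: "e \<le> b^n"
  shows "real (Ae b e) = (\<Sum>A<(b-1)*b^n + b. if gg b A < (b-1)*e then 1 else 0)"
proof -
  let ?X = "(b-1)*b^n + b"
  have gX: "gg b ?X = (b-1)*b^n" unfolding gg_def ds_X[OF b n] by simp
  have le: "(b-1)*e \<le> gg b ?X" unfolding gX using e by (rule mult_le_mono2)
  have AX: "Ae b e \<le> ?X" by (rule Ae_le[OF le])
  have "{A\<in>{..<?X}. gg b A < (b-1)*e} = {..<?X} \<inter> {A. gg b A < (b-1)*e}" by blast
  also have "\<dots> = {..<?X} \<inter> {..<Ae b e}" unfolding Ae_set[OF b] ..
  also have "\<dots> = {..<Ae b e}" using AX by auto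
  finally have st: "{A\<in>{..<?X}. gg b A < (b-1)*e} = {..<Ae b e}" .
  have "real (Ae b e) = (\<Sum>A\<in>{A\<in>{..<?X}. gg b A < (b-1)*e}. 1)" unfolding st by simp
  also have "\<dots> = (\<Sum>A<?X. if gg b A < (b-1)*e then 1 else 0)"
    by (rule sum.inter_filter) simp
  finally show ?thesis .
qed

lemma inner_count:
  assumes b: "b \<ge> 2" and n: "n \<ge> 2" and A: "A < (b-1)*b^n + b"
  shows "(real b - 1) * (\<Sum>e\<le>b^n. (if gg b A < (b-1)*e then 1 else 0::real)) =
     (real b - 1) * real b^n - real A + real (ds b A)"
proof -
  let ?X = "(b-1)*b^n + b"
  obtain phi where phi: "gg b A = (b-1)*phi" using ds_cong[OF b, of A] unfolding gg_def by blast
  have "gg b A \<le> gg b ?X" using gg_mono[OF b] A by simp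
  also have "gg b ?X = (b-1)*b^n" unfolding gg_def ds_X[OF b n] by simp
  finally have "phi \<le> b^n" using phi b by simp
  have "(\<Sum>e\<le>b^n. (if gg b A < (b-1)*e then 1 else 0::real)) = (\<Sum>e\<le>b^n. (if phi < e then 1 else 0::real))"
    by (rule sum.cong) (use phi b in simp_all)
  also have "\<dots> = (\<Sum>e\<in>{e\<in>{..b^n}. phi < e}. 1)"
    by (rule sum.inter_filter[symmetric]) simp
  also have "{e\<in>{..b^n}. phi < e} = {phi<..b^n}" by auto
  finally have "(\<Sum>e\<le>b^n. (if gg b A < (b-1)*e then 1 else 0::real)) = real (b^n - phi)" by simp
  also have "\<dots> = real b^n - real phi" using \<open>phi \<le> b^n\<close> by (simp add: of_nat_diff)
  finally have s: "(\<Sum>e\<le>b^n. (if gg b A < (b-1)*e then 1 else 0::real)) = real b^n - real phi" .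
  have "real (gg b A) = real A - real (ds b A)" unfolding gg_def using ds_le[OF b, of A] by (simp add: of_nat_diff)
  moreover have "real (gg b A) = (real b - 1) * real phi" using phi b by (simp add: of_nat_diff)
  ultimately show ?thesis unfolding s by (simp add: algebra_simps)
qed

lemma sum_Ae:
  assumes b: "b \<ge> 2" and n: "n \<ge> 2"
  shows "(real b - 1) * (\<Sum>e\<le>b^n. real (Ae b e)) =
     (\<Sum>A<(b-1)*b^n + b. (real b - 1) * real b^n - real A + real (ds b A))"
proof -
  let ?X = "(b-1)*b^n + b"
  have "(\<Sum>e\<le>b^n. real (Ae b e)) = (\<Sum>e\<le>b^n. \<Sum>A<?X. if gg b A < (b-1)*e then 1 else 0)"
  proof (rule sum.cong[OF refl])
    fix e assume "e \<in> {..b^n}"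
    then show "real (Ae b e) = (\<Sum>A<?X. if gg b A < (b-1)*e then 1 else 0)"
      using Ae_count[OF b n, of e] by simp
  qed
  also have "\<dots> = (\<Sum>A<?X. \<Sum>e\<le>b^n. if gg b A < (b-1)*e then 1 else 0)" by (rule sum.swap)
  finally have "(real b - 1) * (\<Sum>e\<le>b^n. real (Ae b e)) =
      (\<Sum>A<?X. (real b - 1) * (\<Sum>e\<le>b^n. if gg b A < (b-1)*e then 1 else 0))"
    by (simp add: sum_distrib_left)
  also have "\<dots> = (\<Sum>A<?X. (real b - 1) * real b^n - real A + real (ds b A))"
  proof (rule sum.cong[OF refl])
    fix A assume "A \<in> {..<?X}"
    then show "(real b - 1) * (\<Sum>e\<le>b^n. if gg b A < (b-1)*e then 1 else 0) =
        (real b - 1) * real b^n - real A + real (ds b A)"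
      using inner_count[OF b n, of A] by simp
  qed
  finally show ?thesis .
qed


theorem mainTheorem18:
  fixes b n :: nat
  assumes "even b" and "b \<ge> 2" and "n \<ge> 2"
  shows "real (genus (SCplus b n)) =
    real b + (real b ^ (2 * n) * (real b - 1) + real b ^ n * (real b * real n - real n - 1)) / 2"
proof -
  have ev: "even b" and b: "b \<ge> 2" and nn: "n \<ge> 2" using assms by auto
  obtain L where nL: "n = Suc L" using nn by (metis Suc_pred' less_le_trans pos2)
  define bb where "bb = real b"
  define p where "p = bb ^ L"
  define BB where "BB = bb * p"
  define Xr where "Xr = (bb - 1) * BB + bb"
  define Yr where "Yr = (bb - 1) * p + 1"
  define g where "g = real (genus (SCplus b n))"
  define SA where "SA = (\<Sum>e\<le>b^n. real (Ae b e))"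
  let ?X = "(b-1)*b^n + b"
  let ?Y = "(b-1)*b^L + 1"
  have B: "real b ^ n = BB" unfolding BB_def p_def bb_def nL by simp
  have bb1: "bb - 1 \<noteq> 0" using b unfolding bb_def by simp
  have Xr: "real ?X = Xr" unfolding Xr_def BB_def p_def bb_def nL using b by (simp add: of_nat_diff)
  have XY: "?X = b * ?Y" unfolding nL by (simp add: algebra_simps)
  have Yr: "real ?Y = Yr" unfolding Yr_def p_def bb_def using b by (simp add: of_nat_diff)
  have G: "2 * g = 2 * SA - bb * BB" unfolding g_def SA_def using genus_Ae[OF ev b, of n] B bb_def by simp
  have SAe: "(bb - 1) * SA = (\<Sum>A<?X. (bb - 1) * BB - real A + real (ds b A))"
    unfolding SA_def using sum_Ae[OF b nn] B bb_def by simp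
  also have "\<dots> = Xr * ((bb - 1) * BB) - (\<Sum>A<?X. real A) + (\<Sum>A<?X. real (ds b A))"
    using Xr by (simp add: sum.distrib sum_subtractf)
  finally have SA1: "(bb - 1) * SA = Xr * ((bb - 1) * BB) - (\<Sum>A<?X. real A) + (\<Sum>A<?X. real (ds b A))" .
  have SumA: "2 * (\<Sum>A<?X. real A) = Xr * (Xr - 1)" using double_sum_lt[of ?X] Xr by simp
  have R: "2 * (\<Sum>r<b. real r) = bb * (bb - 1)" using double_sum_lt[of b] bb_def by simp
  have dsl: "ds b ((b-1)*b^L) = b - 1"
    using ds_pow_mult[OF b, of L "b-1"] ds_small[OF b, of "b-1"] b by (simp add: mult.commute)
  have SY: "(\<Sum>q<?Y. real (ds b q)) = (\<Sum>q<(b-1)*b^L. real (ds b q)) + (bb - 1)"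
    using dsl b unfolding bb_def by (simp add: of_nat_diff)
  have T: "2 * (\<Sum>q<(b-1)*b^L. real (ds b q)) = p * (bb - 1) * (bb - 2) + real L * (bb - 1)^2 * p"
    using ds_T[OF b, of L] unfolding p_def bb_def by simp
  have DS: "2 * (\<Sum>A<?X. real (ds b A)) =
      bb * (p * (bb - 1) * (bb - 2) + real L * (bb - 1)^2 * p + 2 * (bb - 1)) + Yr * (bb * (bb - 1))"
  proof -
    have e1: "(\<Sum>A<?X. real (ds b A)) = bb * (\<Sum>q<?Y. real (ds b q)) + Yr * (\<Sum>r<b. real r)"
      unfolding XY ds_sum_block[OF b] bb_def Yr[symmetric] by (rule refl)
    have L2: "\<And>a x c y::real. 2*(a*x + c*y) = a*(2*x) + c*(2*y)" by (simp add: algebra_simps)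
    have E2: "2 * (\<Sum>A<?X. real (ds b A)) = bb * (2 * (\<Sum>q<?Y. real (ds b q))) + Yr * (2 * (\<Sum>r<b. real r))"
      unfolding e1 by (rule L2)
    have E3: "2 * (\<Sum>q<?Y. real (ds b q)) = (p * (bb - 1) * (bb - 2) + real L * (bb - 1)^2 * p) + 2 * (bb - 1)"
      unfolding SY distrib_left T by (rule refl)
    show ?thesis unfolding E2 E3 R by (simp add: algebra_simps)
  qed
  have key: "(bb - 1) * (2 * g) = 2 * Xr * ((bb - 1) * BB) - Xr * (Xr - 1)
      + (bb * (p * (bb - 1) * (bb - 2) + real L * (bb - 1)^2 * p + 2 * (bb - 1)) + Yr * (bb * (bb - 1)))
      - (bb - 1) * (bb * BB)"
  proof -
    have "(bb - 1) * (2 * g) = (bb - 1) * (2 * SA - bb * BB)" using G by simp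
    also have "\<dots> = 2 * ((bb - 1) * SA) - (bb - 1) * (bb * BB)" by (simp add: algebra_simps)
    also have "\<dots> = 2 * Xr * ((bb - 1) * BB) - 2 * (\<Sum>A<?X. real A) + 2 * (\<Sum>A<?X. real (ds b A)) - (bb - 1) * (bb * BB)"
      unfolding SA1 by (simp add: algebra_simps)
    finally show ?thesis unfolding SumA DS .
  qed
  have target: "(bb - 1) * (2 * g) = (bb - 1) * (2 * bb + (BB^2 * (bb - 1) + BB * (bb * real n - real n - 1)))"
    unfolding key Xr_def Yr_def BB_def nL by (simp add: algebra_simps power2_eq_square)
  then have "2 * g = 2 * bb + (BB^2 * (bb - 1) + BB * (bb * real n - real n - 1))"
    using bb1 by simp
  then have "g = bb + (BB^2 * (bb - 1) + BB * (bb * real n - real n - 1)) / 2" by (simp add: field_simps)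
  moreover have "real b ^ (2*n) = BB^2" using B by (simp add: power_mult power2_eq_square mult.commute power_mult_distrib[symmetric]) 
  ultimately show ?thesis unfolding g_def bb_def using B by simp
qed

end
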